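(* Let $G$ be a graph, let $x$, $y$ be two vertices of $G$, and let $F_1, F_2, \ldots, F_c$ be the components of $G\setminus x\setminus y$. If $\rho^*_G(\{x,y\}, V(F_i))=2$ for all $1\le i\le c$, then $G$ has a vertex-minor isomorphic to the graph obtained from two disjoint copies of $K_c$ by adding a perfect matching between them (the $i$-th vertex of one copy joined to the $i$-th vertex of the other).
   Context: All graphs are simple. For disjoint $X,Y\subseteq V(G)$, $\rho^*_G(X,Y)$ denotes the rank over the binary field of the submatrix of the adjacency matrix of $G$ with rows indexed by $X$ and columns indexed by $Y$. A graph $H$ is a vertex-minor of $G$ if $H$ is an induced subgraph of a graph obtained from $G$ by a sequence of local complementations (local complementation at $v$ replaces the subgraph induced on the neighborhood of $v$ by its complement). *)

theory Defs
  imports Main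
begin

definition simple_graph :: "'a set \<Rightarrow> ('a \<Rightarrow> 'a \<Rightarrow> bool) \<Rightarrow> bool" where
  "simple_graph V E \<longleftrightarrow> finite V \<and> (\<forall>u v. E u v \<longrightarrow> u \<in> V \<and> v \<in> V \<and> u \<noteq> v)
     \<and> (\<forall>u v. E u v \<longrightarrow> E v u)"

definition local_comp :: "('a \<Rightarrow> 'a \<Rightarrow> bool) \<Rightarrow> 'a \<Rightarrow> ('a \<Rightarrow> 'a \<Rightarrow> bool)" where
  "local_comp E v = (\<lambda>a b. if a \<noteq> b \<and> E v a \<and> E v b then \<not> E a b else E a b)"

definition lc_seq :: "('a \<Rightarrow> 'a \<Rightarrow> bool) \<Rightarrow> 'a list \<Rightarrow> ('a \<Rightarrow> 'a \<Rightarrow> bool)" where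
  "lc_seq E vs = fold (\<lambda>v E'. local_comp E' v) vs E"

definition induced :: "('a \<Rightarrow> 'a \<Rightarrow> bool) \<Rightarrow> 'a set \<Rightarrow> ('a \<Rightarrow> 'a \<Rightarrow> bool)" where
  "induced E W = (\<lambda>a b. a \<in> W \<and> b \<in> W \<and> E a b)"

definition is_vertex_minor :: "'a set \<Rightarrow> ('a \<Rightarrow> 'a \<Rightarrow> bool) \<Rightarrow> 'a set \<Rightarrow> ('a \<Rightarrow> 'a \<Rightarrow> bool) \<Rightarrow> bool" where
  "is_vertex_minor V E W F \<longleftrightarrow>
     (\<exists>vs. set vs \<subseteq> V \<and> W \<subseteq> V \<and> F = induced (lc_seq E vs) W)"

definition graph_iso :: "'a set \<Rightarrow> ('a \<Rightarrow> 'a \<Rightarrow> bool) \<Rightarrow> 'b set \<Rightarrow> ('b \<Rightarrow> 'b \<Rightarrow> bool) \<Rightarrow> bool" where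
  "graph_iso V E V' E' \<longleftrightarrow>
     (\<exists>f. bij_betw f V V' \<and> (\<forall>a\<in>V. \<forall>b\<in>V. E a b \<longleftrightarrow> E' (f a) (f b)))"

definition matched_cliques_V :: "nat \<Rightarrow> (nat \<times> bool) set" where
  "matched_cliques_V c = {0..<c} \<times> (UNIV :: bool set)"

definition matched_cliques_E :: "nat \<times> bool \<Rightarrow> nat \<times> bool \<Rightarrow> bool" where
  "matched_cliques_E = (\<lambda>(i,p) (j,q). (p = q \<and> i \<noteq> j) \<or> (p \<noteq> q \<and> i = j))"

text \<open>Rank over GF(2) of the X-by-Y submatrix of the adjacency matrix, as row rank:
  a set S of rows is linearly independent over GF(2) iff no nonempty subset sums to zero.\<close>
definition gf2_indep :: "('a \<Rightarrow> 'a \<Rightarrow> bool) \<Rightarrow> 'a set \<Rightarrow> 'a set \<Rightarrow> bool" where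
  "gf2_indep E S Y \<longleftrightarrow>
     (\<forall>T. T \<subseteq> S \<and> T \<noteq> {} \<longrightarrow> \<not> (\<forall>y\<in>Y. even (card {x\<in>T. E x y})))"

definition gf2_rank :: "('a \<Rightarrow> 'a \<Rightarrow> bool) \<Rightarrow> 'a set \<Rightarrow> 'a set \<Rightarrow> nat" where
  "gf2_rank E X Y = Max {card S | S. S \<subseteq> X \<and> gf2_indep E S Y}"

definition components :: "'a set \<Rightarrow> ('a \<Rightarrow> 'a \<Rightarrow> bool) \<Rightarrow> 'a set set" where
  "components U E = (\<lambda>v. {w. (induced E U)\<^sup>*\<^sup>* v w}) ` U"

end

theory Submission
  imports Defs "HOL-Library.Transitive_Closure_Table"
begin


lemma lc_seq_Cons: "lc_seq E (v#vs) = lc_seq (local_comp E v) vs"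
  by (simp add: lc_seq_def)

lemma vm_lc: "w \<in> V \<Longrightarrow> is_vertex_minor V (local_comp E w) W F \<Longrightarrow> is_vertex_minor V E W F"
  unfolding is_vertex_minor_def
  by (metis insert_subset lc_seq_Cons list.simps(15))

lemma induced_lc: "v \<in> U \<Longrightarrow> induced (local_comp E v) U = local_comp (induced E U) v"
  by (auto simp: induced_def local_comp_def fun_eq_iff)

lemma lc_seq_induced: "set vs \<subseteq> U \<Longrightarrow> lc_seq (induced E U) vs = induced (lc_seq E vs) U"
proof (induction vs arbitrary: E)
  case Nil
  then show ?case by (simp add: lc_seq_def)
next
  case (Cons a vs)
  then show ?case by (simp add: lc_seq_Cons induced_lc[symmetric])
qed

lemma induced_induced: "W \<subseteq> U \<Longrightarrow> induced (induced E U) W = induced E W"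
  by (auto simp: induced_def fun_eq_iff)

lemma vm_del: "V' \<subseteq> V \<Longrightarrow> is_vertex_minor V' (induced E V') W F \<Longrightarrow> is_vertex_minor V E W F"
  unfolding is_vertex_minor_def
  by (metis lc_seq_induced induced_induced order_trans)

lemma simple_lc: "simple_graph V E \<Longrightarrow> simple_graph V (local_comp E w)"
  unfolding simple_graph_def local_comp_def by metis

lemma simple_induced: "simple_graph V E \<Longrightarrow> V' \<subseteq> V \<Longrightarrow> simple_graph V' (induced E V')"
  unfolding simple_graph_def induced_def by (auto intro: finite_subset)

definition rk2 :: "('a \<Rightarrow> 'a \<Rightarrow> bool) \<Rightarrow> 'a \<Rightarrow> 'a \<Rightarrow> 'a set \<Rightarrow> bool" where
  "rk2 E x y D \<longleftrightarrow> (\<exists>d\<in>D. E x d) \<and> (\<exists>d\<in>D. E y d) \<and> (\<exists>d\<in>D. E x d \<noteq> E y d)"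

lemma card_single_filter: "card {z\<in>{x}. P z} = (if P x then 1 else 0)"
proof -
  have "{z\<in>{x}. P z} = (if P x then {x} else {})" by auto
  then show ?thesis by simp
qed

lemma card_pair_filter: "card {z\<in>{x,y}. P z} = (if P x then 1 else 0) + (if P y then 1 else (0::nat))" if "x \<noteq> y"
proof -
  have "{z\<in>{x,y}. P z} = (if P x then {x} else {}) \<union> (if P y then {y} else {})" by auto
  then show ?thesis using that by (auto simp: card_insert_if)
qed

lemma indep_pair: assumes "x \<noteq> y" shows "gf2_indep E {x,y} D \<longleftrightarrow> rk2 E x y D"
proof -
  have T: "T \<subseteq> {x,y} \<and> T \<noteq> {} \<longleftrightarrow> T = {x} \<or> T = {y} \<or> T = {x,y}" for T
    by auto
  have "gf2_indep E {x,y} D \<longleftrightarrow>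
     \<not> (\<forall>d\<in>D. even (card {z\<in>{x}. E z d})) \<and> \<not> (\<forall>d\<in>D. even (card {z\<in>{y}. E z d}))
     \<and> \<not> (\<forall>d\<in>D. even (card {z\<in>{x,y}. E z d}))"
    unfolding gf2_indep_def T by blast
  also have "\<dots> \<longleftrightarrow> rk2 E x y D"
    unfolding card_single_filter card_pair_filter[OF assms] rk2_def by auto
  finally show ?thesis .
qed

lemma gf2_rank_2: assumes "x \<noteq> y" shows "gf2_rank E {x,y} D = 2 \<longleftrightarrow> rk2 E x y D"
proof -
  let ?S = "{card S | S. S \<subseteq> {x,y} \<and> gf2_indep E S D}"
  have fin: "finite ?S"
  proof -
    have "?S \<subseteq> card ` Pow {x,y}" by auto
    then show ?thesis by (rule finite_subset) auto
  qed
  have le: "n \<le> 2" if "n \<in> ?S" for n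
  proof -
    from that obtain S where "n = card S" "S \<subseteq> {x,y}" by auto
    then have "n \<le> card {x,y}" by (simp add: card_mono)
    then show ?thesis using assms by simp
  qed
  have ne: "0 \<in> ?S"
    by (rule CollectI, rule exI[of _ "{}"]) (auto simp: gf2_indep_def)
  have two: "2 \<in> ?S \<longleftrightarrow> gf2_indep E {x,y} D"
  proof
    assume "2 \<in> ?S"
    then obtain S where S: "card S = 2" "S \<subseteq> {x,y}" "gf2_indep E S D" by auto
    have "S = {x,y}" using S assms by (metis card_2_iff card_subset_eq finite.emptyI finite.insertI)
    then show "gf2_indep E {x,y} D" using S by simp
  next
    assume "gf2_indep E {x,y} D"
    then show "2 \<in> ?S" using assms by (auto intro!: exI[of _ "{x,y}"])
  qed
  have "gf2_rank E {x,y} D = Max ?S" by (simp add: gf2_rank_def)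
  moreover have "Max ?S = 2 \<longleftrightarrow> 2 \<in> ?S"
  proof
    assume "Max ?S = 2" then show "2 \<in> ?S" using Max_in[OF fin] ne by force
  next
    assume "2 \<in> ?S" then show "Max ?S = 2" using fin le by (meson Max_eqI)
  qed
  ultimately show ?thesis using two indep_pair[OF assms] by simp
qed



lemma rtranclp_closed:
  assumes "r\<^sup>*\<^sup>* a b" "a \<in> K" "\<And>p q. p \<in> K \<Longrightarrow> r p q \<Longrightarrow> q \<in> K"
  shows "(\<lambda>p q. p \<in> K \<and> q \<in> K \<and> r p q)\<^sup>*\<^sup>* a b \<and> b \<in> K"
  using assms(1)
proof (induction rule: rtranclp_induct)
  case base
  then show ?case using assms(2) by simp
next
  case (step z w)
  then have "w \<in> K" using assms(3) by blast
  have h2: "(\<lambda>p q. p \<in> K \<and> q \<in> K \<and> r p q) z w" using step \<open>w \<in> K\<close> by simp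
  have h1: "(\<lambda>p q. p \<in> K \<and> q \<in> K \<and> r p q)\<^sup>*\<^sup>* a z" using step.IH by simp
  from h1 h2 have "(\<lambda>p q. p \<in> K \<and> q \<in> K \<and> r p q)\<^sup>*\<^sup>* a w"
    by (rule rtranclp.rtrancl_into_rtrancl)
  then show ?case using \<open>w \<in> K\<close> by simp
qed

lemma rtranclp_sym:
  assumes "r\<^sup>*\<^sup>* a b" "\<And>p q. r p q \<Longrightarrow> r q p"
  shows "r\<^sup>*\<^sup>* b a"
  using assms(1)
proof (induction rule: rtranclp_induct)
  case base then show ?case by simp
next
  case (step z w)
  then show ?case by (meson assms(2) converse_rtranclp_into_rtranclp)
qed

lemma induced_sym: "simple_graph V E \<Longrightarrow> induced E U p q \<Longrightarrow> induced E U q p"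
  unfolding simple_graph_def induced_def by blast

definition reach :: "'a set \<Rightarrow> ('a \<Rightarrow> 'a \<Rightarrow> bool) \<Rightarrow> 'a \<Rightarrow> 'a set" where
  "reach U E v = {w. (induced E U)\<^sup>*\<^sup>* v w}"

lemma components_reach: "components U E = reach U E ` U"
  by (simp add: components_def reach_def)

lemma reach_sub: "v \<in> U \<Longrightarrow> reach U E v \<subseteq> U"
proof
  fix w assume "v \<in> U" "w \<in> reach U E v"
  then have "(induced E U)\<^sup>*\<^sup>* v w" by (simp add: reach_def)
  then show "w \<in> U" using \<open>v \<in> U\<close>
    by (induction rule: rtranclp_induct) (auto simp: induced_def)
qed

lemma reach_self: "v \<in> reach U E v"
  by (simp add: reach_def)

lemma comp_obtain: "K \<in> components U E \<Longrightarrow> \<exists>v\<in>U. K = reach U E v"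
  unfolding components_reach by blast

lemma comp_sub: "K \<in> components U E \<Longrightarrow> K \<subseteq> U"
proof -
  assume "K \<in> components U E"
  then obtain v where v: "v \<in> U" "K = reach U E v" unfolding components_reach by (rule imageE) simp
  show "K \<subseteq> U" unfolding v(2) by (rule reach_sub[OF v(1)])
qed

lemma comp_eq:
  assumes "simple_graph V E" "K \<in> components U E" "a \<in> K"
  shows "K = reach U E a"
proof -
  obtain v where v: "v \<in> U" "K = reach U E v" using comp_obtain[OF assms(2)] by blast
  have va: "(induced E U)\<^sup>*\<^sup>* v a" using assms(3) v by (simp add: reach_def)
  have av: "(induced E U)\<^sup>*\<^sup>* a v"
    by (rule rtranclp_sym[OF va]) (rule induced_sym[OF assms(1)])
  show ?thesis unfolding v reach_def
  proof (rule set_eqI, rule iffI)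
    fix w assume "w \<in> {w. (induced E U)\<^sup>*\<^sup>* v w}"
    then have "(induced E U)\<^sup>*\<^sup>* v w" by simp
    then show "w \<in> {w. (induced E U)\<^sup>*\<^sup>* a w}" using rtranclp_trans[OF av] by simp
  next
    fix w assume "w \<in> {w. (induced E U)\<^sup>*\<^sup>* a w}"
    then have "(induced E U)\<^sup>*\<^sup>* a w" by simp
    then show "w \<in> {w. (induced E U)\<^sup>*\<^sup>* v w}" using rtranclp_trans[OF va] by simp
  qed
qed

lemma comp_disj:
  assumes "simple_graph V E" "K1 \<in> components U E" "K2 \<in> components U E" "a \<in> K1" "a \<in> K2"
  shows "K1 = K2"
  using comp_eq[OF assms(1,2,4)] comp_eq[OF assms(1,3,5)] by simp

lemma comp_cover: "v \<in> U \<Longrightarrow> \<exists>K\<in>components U E. v \<in> K"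
  unfolding components_reach using reach_self[of v U E] by blast

lemma comp_noedge:
  assumes "simple_graph V E" "K \<in> components U E" "a \<in> K" "b \<in> U" "E a b"
  shows "b \<in> K"
proof -
  have K: "K = reach U E a" by (rule comp_eq[OF assms(1-3)])
  have "a \<in> U" using comp_sub[OF assms(2)] assms(3) by blast
  then have "induced E U a b" using assms(4,5) by (simp add: induced_def)
  then show ?thesis unfolding K reach_def by simp
qed

lemma comp_conn:
  assumes "simple_graph V E" "K \<in> components U E" "a \<in> K" "b \<in> K"
  shows "(induced E K)\<^sup>*\<^sup>* a b"
proof -
  have K: "K = reach U E a" by (rule comp_eq[OF assms(1-3)])
  have ab: "(induced E U)\<^sup>*\<^sup>* a b" using assms(4) K by (simp add: reach_def)
  have cl: "q \<in> K" if "p \<in> K" "induced E U p q" for p q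
    using that comp_noedge[OF assms(1,2)] by (auto simp: induced_def)
  have "(\<lambda>p q. p \<in> K \<and> q \<in> K \<and> induced E U p q)\<^sup>*\<^sup>* a b"
    using rtranclp_closed[where r="induced E U" and K=K, OF ab assms(3)] cl by blast
  moreover have "(\<lambda>p q. p \<in> K \<and> q \<in> K \<and> induced E U p q) = induced E K"
    using comp_sub[OF assms(2)] by (auto simp: induced_def fun_eq_iff)
  ultimately show ?thesis by simp
qed

lemma comp_char:
  assumes P1: "\<forall>P\<in>\<P>. P \<noteq> {}"
    and P2: "\<Union>\<P> = U"
    and P3: "\<forall>P\<in>\<P>. \<forall>Q\<in>\<P>. P \<noteq> Q \<longrightarrow> P \<inter> Q = {}"
    and P4: "\<forall>P\<in>\<P>. \<forall>a\<in>P. \<forall>b\<in>P. (induced E P)\<^sup>*\<^sup>* a b"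
    and P5: "\<forall>P\<in>\<P>. \<forall>a\<in>P. \<forall>b. b \<in> U \<longrightarrow> E a b \<longrightarrow> b \<in> P"
  shows "components U E = \<P>"
proof -
  have R: "reach U E v = P" if "P \<in> \<P>" "v \<in> P" for P v
  proof
    have PU: "P \<subseteq> U" using P2 that by blast
    show "P \<subseteq> reach U E v"
    proof
      fix w assume "w \<in> P"
      then have "(induced E P)\<^sup>*\<^sup>* v w" using P4 that by blast
      moreover have "induced E P \<le> induced E U" using PU by (auto simp: induced_def)
      ultimately show "w \<in> reach U E v" by (auto simp: reach_def dest: rtranclp_mono)
    qed
    show "reach U E v \<subseteq> P"
    proof
      fix w assume "w \<in> reach U E v"
      then have "(induced E U)\<^sup>*\<^sup>* v w" by (simp add: reach_def)
      then show "w \<in> P" using that(2)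
      proof (induction rule: rtranclp_induct)
        case base then show ?case .
      next
        case (step z w)
        then have "z \<in> P" "w \<in> U" "E z w" by (auto simp: induced_def)
        then show ?case using P5 that(1) by blast
      qed
    qed
  qed
  show ?thesis unfolding components_reach
  proof
    show "reach U E ` U \<subseteq> \<P>"
    proof
      fix K assume "K \<in> reach U E ` U"
      then obtain v where "v \<in> U" "K = reach U E v" by blast
      then obtain P where "P \<in> \<P>" "v \<in> P" using P2 by blast
      then show "K \<in> \<P>" using R \<open>K = reach U E v\<close> by simp
    qed
    show "\<P> \<subseteq> reach U E ` U"
    proof
      fix P assume "P \<in> \<P>"
      then obtain v where "v \<in> P" using P1 by blast
      then have "v \<in> U" using P2 \<open>P \<in> \<P>\<close> by blast
      then show "P \<in> reach U E ` U" using R[OF \<open>P \<in> \<P>\<close> \<open>v \<in> P\<close>] by blast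
    qed
  qed
qed

lemma comp_finite: "finite U \<Longrightarrow> finite (components U E)"
  unfolding components_reach by (rule finite_imageI)

lemma comp_ne: "K \<in> components U E \<Longrightarrow> K \<noteq> {}"
proof -
  assume "K \<in> components U E"
  then obtain v where "v \<in> U" "K = reach U E v" using comp_obtain by blast
  then show "K \<noteq> {}" using reach_self[of v U E] by auto
qed



definition Good :: "'a set \<Rightarrow> ('a \<Rightarrow> 'a \<Rightarrow> bool) \<Rightarrow> 'a \<Rightarrow> 'a \<Rightarrow> bool" where
  "Good V E x y \<longleftrightarrow> simple_graph V E \<and> x \<in> V \<and> y \<in> V \<and> x \<noteq> y \<and>
     (\<forall>C\<in>components (V-{x,y}) E. rk2 E x y C)"

definition Claim :: "'a set \<Rightarrow> ('a \<Rightarrow> 'a \<Rightarrow> bool) \<Rightarrow> 'a \<Rightarrow> 'a \<Rightarrow> bool" where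
  "Claim V E x y \<longleftrightarrow> (\<exists>W F. is_vertex_minor V E W F \<and>
     graph_iso W F (matched_cliques_V (card (components (V - {x, y}) E))) matched_cliques_E)"

lemma shrink_general:
  assumes G: "Good V E x y" and C: "C \<in> components (V-{x,y}) E"
    and S': "simple_graph V E'"
    and agree: "\<And>a b. \<not>(a\<in>C \<and> b\<in>C) \<Longrightarrow> E' a b = E a b"
    and D: "D \<subseteq> C" "D \<noteq> {}" "D \<noteq> C"
    and conn: "\<forall>a\<in>D. \<forall>b\<in>D. (induced E' D)\<^sup>*\<^sup>* a b"
    and rkD: "rk2 E' x y D"
  shows "Good ((V-C) \<union> D) (induced E' ((V-C) \<union> D)) x y \<and>
         card (components (((V-C) \<union> D) - {x,y}) (induced E' ((V-C) \<union> D))) = card (components (V-{x,y}) E) \<and>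
         card ((V-C) \<union> D) < card V \<and> (V-C) \<union> D \<subseteq> V"
proof -
  define U where "U = V - {x,y}"
  define V' where "V' = (V-C) \<union> D"
  define E'' where "E'' = induced E' V'"
  define CC where "CC = components U E"
  have sg: "simple_graph V E" and xV: "x \<in> V" and yV: "y \<in> V" and xy: "x \<noteq> y"
    and rk: "\<forall>K\<in>CC. rk2 E x y K"
    using G by (auto simp: Good_def CC_def U_def)
  have C': "C \<in> CC" using C by (simp add: CC_def U_def)
  have CU: "C \<subseteq> U" using comp_sub[OF C'[unfolded CC_def]] .
  have finV: "finite V" using sg by (simp add: simple_graph_def)
  have V'V: "V' \<subseteq> V" using D CU by (auto simp: V'_def U_def)
  have U': "V' - {x,y} = (U - C) \<union> D" using CU D by (auto simp: V'_def U_def)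
  have xV': "x \<in> V'" "y \<in> V'" using CU xV yV by (auto simp: V'_def U_def)
  define P where "P = (CC - {C}) \<union> {D}"
  have disjC: "K \<inter> C = {}" if "K \<in> CC" "K \<noteq> C" for K
    using comp_disj[OF sg that(1)[unfolded CC_def] C'[unfolded CC_def]] that(2) by blast
  have KU: "K \<subseteq> U" if "K \<in> CC" for K using comp_sub that by (simp add: CC_def)
  have KV': "K \<subseteq> V'" if "K \<in> CC" "K \<noteq> C" for K
    using KU[OF that(1)] disjC[OF that] by (auto simp: V'_def U_def)
  have indK: "induced E'' K = induced E K" if "K \<in> CC" "K \<noteq> C" for K
    using KV'[OF that] disjC[OF that] agree by (auto simp: induced_def E''_def fun_eq_iff)
  have indD: "induced E'' D = induced E' D"
    by (auto simp: induced_def E''_def V'_def fun_eq_iff)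
  have comps': "components (V'-{x,y}) E'' = P"
    unfolding U'
  proof (rule comp_char)
    show "\<forall>Q\<in>P. Q \<noteq> {}" using D comp_ne by (auto simp: P_def CC_def)
    show "\<Union>P = U - C \<union> D"
    proof
      show "\<Union>P \<subseteq> U - C \<union> D" using KU disjC by (auto simp: P_def)
      show "U - C \<union> D \<subseteq> \<Union>P"
      proof
        fix u assume u: "u \<in> U - C \<union> D"
        show "u \<in> \<Union>P"
        proof (cases "u \<in> D")
          case True then show ?thesis by (simp add: P_def)
        next
          case False
          then have "u \<in> U" "u \<notin> C" using u by auto
          then obtain K where "K \<in> CC" "u \<in> K" using comp_cover[of u U E] by (auto simp: CC_def)
          then show ?thesis using \<open>u \<notin> C\<close> by (auto simp: P_def)
        qed
      qed
    qed
    show "\<forall>Q1\<in>P. \<forall>Q2\<in>P. Q1 \<noteq> Q2 \<longrightarrow> Q1 \<inter> Q2 = {}"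
    proof (intro ballI impI)
      fix Q1 Q2 assume Q: "Q1 \<in> P" "Q2 \<in> P" "Q1 \<noteq> Q2"
      show "Q1 \<inter> Q2 = {}"
      proof (cases "Q1 = D")
        case True
        then have "Q2 \<in> CC" "Q2 \<noteq> C" using Q by (auto simp: P_def)
        then show ?thesis using disjC D True by blast
      next
        case False
        then have q1: "Q1 \<in> CC" "Q1 \<noteq> C" using Q by (auto simp: P_def)
        show ?thesis
        proof (cases "Q2 = D")
          case True then show ?thesis using disjC[OF q1] D by blast
        next
          case False
          then have "Q2 \<in> CC" using Q by (auto simp: P_def)
          then show ?thesis using comp_disj[OF sg q1(1)[unfolded CC_def]] Q(3) by (auto simp: CC_def)
        qed
      qed
    qed
    show "\<forall>Q\<in>P. \<forall>a\<in>Q. \<forall>b\<in>Q. (induced E'' Q)\<^sup>*\<^sup>* a b"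
    proof (intro ballI)
      fix Q a b assume Q: "Q \<in> P" "a \<in> Q" "b \<in> Q"
      show "(induced E'' Q)\<^sup>*\<^sup>* a b"
      proof (cases "Q = D")
        case True then show ?thesis using conn Q indD by simp
      next
        case False
        then have q: "Q \<in> CC" "Q \<noteq> C" using Q by (auto simp: P_def)
        then show ?thesis using indK[OF q] comp_conn[OF sg q(1)[unfolded CC_def] Q(2,3)] by simp
      qed
    qed
    show "\<forall>Q\<in>P. \<forall>a\<in>Q. \<forall>b. b \<in> U - C \<union> D \<longrightarrow> E'' a b \<longrightarrow> b \<in> Q"
    proof (intro ballI allI impI)
      fix Q a b assume Q: "Q \<in> P" "a \<in> Q" and b: "b \<in> U - C \<union> D" and ab: "E'' a b"
      show "b \<in> Q"
      proof (cases "Q = D")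
        case True
        show ?thesis
        proof (rule ccontr)
          assume "b \<notin> Q"
          then have bC: "b \<notin> C" "b \<in> U" using b True by auto
          have aC: "a \<in> C" using Q True D by auto
          have "E a b" using ab agree[of a b] bC by (simp add: E''_def induced_def)
          then have "b \<in> C" using comp_noedge[OF sg C'[unfolded CC_def] aC bC(2)] by simp
          then show False using bC by simp
        qed
      next
        case False
        then have q: "Q \<in> CC" "Q \<noteq> C" using Q by (auto simp: P_def)
        have aC: "a \<notin> C" using disjC[OF q] Q(2) by blast
        have "E a b" using ab agree[of a b] aC by (simp add: E''_def induced_def)
        moreover have "b \<in> U" using b D CU by auto
        ultimately show ?thesis using comp_noedge[OF sg q(1)[unfolded CC_def] Q(2)] by simp
      qed
    qed
  qed
  have finCC: "finite CC" using finV comp_finite[of U E] by (simp add: CC_def U_def)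
  have DnotCC: "D \<notin> CC - {C}"
  proof
    assume "D \<in> CC - {C}"
    then have "D \<inter> C = {}" using disjC by blast
    then show False using D by blast
  qed
  have cardP: "card P = card CC"
  proof -
    have "card P = card (CC - {C}) + 1" unfolding P_def using DnotCC finCC by simp
    also have "\<dots> = card CC" using C' finCC
      by (metis card_Diff_singleton card.remove Suc_eq_plus1)
    finally show ?thesis .
  qed
  have simple': "simple_graph V' E''" using simple_induced[OF S' V'V] by (simp add: E''_def)
  have rk': "\<forall>Q\<in>P. rk2 E'' x y Q"
  proof
    fix Q assume Q: "Q \<in> P"
    show "rk2 E'' x y Q"
    proof (cases "Q = D")
      case True
      have "E'' x d = E' x d" "E'' y d = E' y d" if "d \<in> D" for d
        using that xV' by (auto simp: E''_def induced_def V'_def)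
      then show ?thesis using rkD True unfolding rk2_def by auto
    next
      case False
      then have q: "Q \<in> CC" "Q \<noteq> C" using Q by (auto simp: P_def)
      have xyC: "x \<notin> C" "y \<notin> C" using CU by (auto simp: U_def)
      have "E'' x d = E x d" "E'' y d = E y d" if "d \<in> Q" for d
        using that xV' KV'[OF q] agree xyC by (auto simp: E''_def induced_def)
      then show ?thesis using rk q(1) unfolding rk2_def by auto
    qed
  qed
  have cardV: "card V' < card V"
  proof -
    obtain w where "w \<in> C" "w \<notin> D" using D by blast
    then have "w \<notin> V'" using disjC by (auto simp: V'_def)
    moreover have "w \<in> V" using \<open>w \<in> C\<close> CU by (auto simp: U_def)
    ultimately have "V' \<subset> V" using V'V by blast
    then show ?thesis using finV by (simp add: psubset_card_mono)
  qed
  show ?thesis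
    using simple' xV' xy rk' comps' cardP cardV V'V
    unfolding Good_def V'_def[symmetric] E''_def[symmetric] U_def[symmetric] CC_def[symmetric]
    by simp
qed



lemma path_Cons: "rtrancl_path r a (y#ys) b \<longleftrightarrow> r a y \<and> rtrancl_path r y ys b"
  by (auto elim: rtrancl_path.cases intro: rtrancl_path.step)

lemma path_Nil: "rtrancl_path r a [] b \<longleftrightarrow> a = b"
  by (auto elim: rtrancl_path.cases intro: rtrancl_path.base)

lemma path_suffix:
  "rtrancl_path r a xs b \<Longrightarrow> z \<in> set xs \<Longrightarrow> \<exists>ys. rtrancl_path r z ys b \<and> length ys < length xs"
proof (induction rule: rtrancl_path.induct)
  case (base x) then show ?case by simp
next
  case (step x y ys z')
  show ?case
  proof (cases "z = y")
    case True then show ?thesis using step by auto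
  next
    case False
    then have "z \<in> set ys" using step by simp
    then obtain zs where "rtrancl_path r z zs z'" "length zs < length ys" using step.IH by blast
    then show ?thesis by (intro exI[of _ zs]) simp
  qed
qed

lemma path_reach:
  "rtrancl_path r a xs b \<Longrightarrow> z \<in> insert a (set xs) \<Longrightarrow> r\<^sup>*\<^sup>* a z"
proof (induction rule: rtrancl_path.induct)
  case (base x) then show ?case by simp
next
  case (step x y ys z')
  show ?case
  proof (cases "z = x")
    case True then show ?thesis by simp
  next
    case False
    then have "z \<in> insert y (set ys)" using step by simp
    then have "r\<^sup>*\<^sup>* y z" using step.IH by blast
    then show ?thesis using converse_rtranclp_into_rtranclp[of r x y z] step.hyps(1) by blast
  qed
qed

lemma path_mono:
  "rtrancl_path r a xs b \<Longrightarrow> (\<And>p q. r p q \<Longrightarrow> p \<in> insert a (set xs) \<Longrightarrow> q \<in> set xs \<Longrightarrow> r' p q)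
   \<Longrightarrow> rtrancl_path r' a xs b"
proof (induction rule: rtrancl_path.induct)
  case (base x) show ?case by (rule rtrancl_path.base)
next
  case (step x y ys z)
  have "r' x y" using step.prems step.hyps(1) by simp
  moreover have "rtrancl_path r' y ys z" using step.IH step.prems by simp
  ultimately show ?case by (rule rtrancl_path.step)
qed

lemma path_last: "rtrancl_path r a xs b \<Longrightarrow> xs \<noteq> [] \<Longrightarrow> b \<in> set xs"
proof (induction rule: rtrancl_path.induct)
  case (base x) then show ?case by simp
next
  case (step x y ys z)
  then show ?case by (cases ys) (auto simp: path_Nil)
qed

lemma path_in: "rtrancl_path (induced E C) a xs b \<Longrightarrow> set xs \<subseteq> C"
  by (induction rule: rtrancl_path.induct) (auto simp: induced_def)

lemma shrink:
  assumes G: "Good V E x y" and C: "C \<in> components (V-{x,y}) E" and c3: "3 \<le> card C"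
  shows "\<exists>V' E'. V' \<subseteq> V \<and> card V' < card V \<and> Good V' E' x y \<and>
     card (components (V'-{x,y}) E') = card (components (V-{x,y}) E) \<and>
     (\<forall>W F. is_vertex_minor V' E' W F \<longrightarrow> is_vertex_minor V E W F)"
proof -
  define U where "U = V - {x,y}"
  have sg: "simple_graph V E" and xV: "x \<in> V" and yV: "y \<in> V" and xy: "x \<noteq> y"
    and rkC: "rk2 E x y C"
    using G C by (auto simp: Good_def)
  have CU: "C \<subseteq> U" using comp_sub[OF C] by (simp add: U_def)
  have sym: "E a b \<Longrightarrow> E b a" for a b using sg by (simp add: simple_graph_def)
  have irr: "\<not> E a a" for a using sg unfolding simple_graph_def by blast
  have inV: "E a b \<Longrightarrow> a \<in> V \<and> b \<in> V" for a b using sg by (simp add: simple_graph_def)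
  define R where "R = induced E C"
  define ok where "ok u v \<longleftrightarrow> (E x u \<or> E y u) \<and> (E x v \<or> E y v) \<and> \<not>(E x u = E x v \<and> E y u = E y v)" for u v
  have okrk: "rk2 E x y {u,v}" if "ok u v" for u v using that unfolding ok_def rk2_def by auto
  have ok_ne: "ok u v \<Longrightarrow> u \<noteq> v" for u v by (auto simp: ok_def)
  obtain u0 v0 where uv0: "u0 \<in> C" "v0 \<in> C" "ok u0 v0"
  proof -
    obtain d1 d2 d3 where d: "d1 \<in> C" "E x d1" "d2 \<in> C" "E y d2" "d3 \<in> C" "E x d3 \<noteq> E y d3"
      using rkC unfolding rk2_def by blast
    show ?thesis
    proof (cases "E x d3")
      case True
      then have "ok d3 d2" using d by (auto simp: ok_def)
      then show ?thesis using that d by blast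
    next
      case False
      then have "ok d3 d1" using d by (auto simp: ok_def)
      then show ?thesis using that d by blast
    qed
  qed
  have "R\<^sup>*\<^sup>* u0 v0" using comp_conn[OF sg C uv0(1,2)] by (simp add: R_def)
  then obtain xs0 where xs0: "rtrancl_path R u0 xs0 v0" by (auto simp: rtranclp_eq_rtrancl_path)
  define PP where "PP = (\<lambda>(u,xs,v). ok u v \<and> rtrancl_path R u xs v)"
  define m where "m = (\<lambda>(u::'a, xs::'a list, v::'a). length xs)"
  have "PP (u0,xs0,v0)" using xs0 uv0 by (simp add: PP_def)
  from ex_has_least_nat[of PP, OF this, of m]
  obtain t where t: "PP t" "\<forall>s. PP s \<longrightarrow> m t \<le> m s" by blast
  obtain u xs v where tuv: "t = (u,xs,v)" by (cases t) auto
  have okuv: "ok u v" and pth: "rtrancl_path R u xs v" using t(1) tuv by (auto simp: PP_def)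
  have minl: "length xs \<le> length xs'" if "ok u' v'" "rtrancl_path R u' xs' v'" for u' xs' v'
    using t(2) that tuv by (auto simp: PP_def m_def)
  have RC: "R a b \<Longrightarrow> a \<in> C \<and> b \<in> C \<and> E a b" for a b by (simp add: R_def induced_def)
  have Rsym: "R a b \<Longrightarrow> R b a" for a b using sym by (auto simp: R_def induced_def)
  have "xs \<noteq> []" using pth okuv ok_ne by (auto simp: path_Nil)
  then obtain w1 xs' where xs: "xs = w1 # xs'" by (cases xs) auto
  have Ruw1: "R u w1" and p1: "rtrancl_path R w1 xs' v" using pth xs by (auto simp: path_Cons)
  have uC: "u \<in> C" and w1C: "w1 \<in> C" using RC[OF Ruw1] by auto
  show ?thesis
  proof (cases xs')
    case Nil
    then have vw: "v = w1" using p1 by (simp add: path_Nil)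
    define D where "D = {u,v}"
    have Euv: "E u v" using RC[OF Ruw1] vw by simp
    have DC: "D \<subseteq> C" using uC w1C vw by (simp add: D_def)
    have DnC: "D \<noteq> C"
    proof
      assume "D = C"
      have "card D \<le> 2" unfolding D_def by (simp add: card_insert_if)
      then have "card C \<le> 2" using \<open>D = C\<close> by simp
      then show False using c3 by simp
    qed
    have conn: "\<forall>a\<in>D. \<forall>b\<in>D. (induced E D)\<^sup>*\<^sup>* a b"
    proof (intro ballI)
      fix a b assume ab: "a \<in> D" "b \<in> D"
      show "(induced E D)\<^sup>*\<^sup>* a b"
      proof (cases "a = b")
        case True then show ?thesis by simp
      next
        case False
        then have "E a b" using ab Euv sym by (auto simp: D_def)
        then have "induced E D a b" using ab by (simp add: induced_def)
        then show ?thesis by simp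
      qed
    qed
    have res: "Good ((V-C) \<union> D) (induced E ((V-C) \<union> D)) x y \<and>
         card (components (((V-C) \<union> D) - {x,y}) (induced E ((V-C) \<union> D))) = card (components (V-{x,y}) E) \<and>
         card ((V-C) \<union> D) < card V \<and> (V-C) \<union> D \<subseteq> V"
      by (rule shrink_general[OF G C sg _ DC _ DnC conn]) (use okrk[OF okuv] in \<open>auto simp: D_def\<close>)
    show ?thesis
      using res vm_del[of "(V-C) \<union> D" V E] by blast
  next
    case (Cons w2 rest)
    have Rw12: "R w1 w2" and p2: "rtrancl_path R w2 rest v" using p1 Cons by (auto simp: path_Cons)
    have w2C: "w2 \<in> C" using RC[OF Rw12] by simp
    have restC: "set rest \<subseteq> C" using path_in p2 by (simp add: R_def)
    have len: "length xs = Suc (Suc (length rest))" using xs Cons by simp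
    have m1: "\<not> (E x w1 \<or> E y w1)"
    proof
      assume nz: "E x w1 \<or> E y w1"
      show False
      proof (cases "ok u w1")
        case True
        have "rtrancl_path R u [w1] w1" using Ruw1 by (simp add: path_Cons path_Nil)
        from minl[OF True this] len show False by simp
      next
        case False
        then have "ok w1 v" using okuv nz by (auto simp: ok_def)
        from minl[OF this p1] len Cons show False by simp
      qed
    qed
    have m2: "u \<noteq> w2"
    proof
      assume "u = w2"
      from minl[OF okuv p2[folded this]] len show False by simp
    qed
    have m2': "\<not> E u w2"
    proof
      assume "E u w2"
      then have "R u w2" using uC w2C by (simp add: R_def induced_def)
      then have "rtrancl_path R u (w2 # rest) v" using p2 by (simp add: path_Cons)
      from minl[OF okuv this] len show False by simp
    qed
    have m3: "\<not> E w1 z" if zr: "z \<in> set rest" for z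
    proof
      assume Ez: "E w1 z"
      obtain ys where ys: "rtrancl_path R z ys v" "length ys < length rest"
        using path_suffix[OF p2 zr] by blast
      have "R w1 z" using Ez w1C restC zr by (auto simp: R_def induced_def)
      then have "rtrancl_path R u (w1 # z # ys) v" using Ruw1 ys(1) by (simp add: path_Cons)
      from minl[OF okuv this] len ys(2) show False by simp
    qed
    have m4: "u \<notin> set rest"
    proof
      assume "u \<in> set rest"
      from path_suffix[OF p2 this] obtain ys where ys: "rtrancl_path R u ys v" "length ys < length rest" by blast
      from minl[OF okuv ys(1)] ys(2) len show False by simp
    qed
    have m5: "w1 \<notin> set rest"
    proof
      assume "w1 \<in> set rest"
      from path_suffix[OF p2 this] obtain ys where ys: "rtrancl_path R w1 ys v" "length ys < length rest" by blast
      then have "rtrancl_path R u (w1 # ys) v" using Ruw1 by (simp add: path_Cons)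
      from minl[OF okuv this] len ys(2) show False by simp
    qed
    have w1u: "w1 \<noteq> u" using RC[OF Ruw1] irr by auto
    have w12: "w1 \<noteq> w2" using RC[OF Rw12] irr by auto
    define D where "D = insert u (set (w2 # rest))"
    have w1D: "w1 \<notin> D" using w1u w12 m5 by (simp add: D_def)
    have DC: "D \<subseteq> C" using uC w2C restC by (simp add: D_def)
    have vD: "v \<in> D" using path_last[OF p1] Cons by (simp add: D_def)
    have uD: "u \<in> D" by (simp add: D_def)
    define E' where "E' = local_comp E w1"
    have S': "simple_graph V E'" using simple_lc[OF sg] by (simp add: E'_def)
    have NC: "z \<in> C" if "E w1 z" for z
    proof -
      have "z \<in> V" using inV[OF that] by simp
      moreover have "z \<noteq> x" "z \<noteq> y" using m1 that sym by auto
      ultimately have "z \<in> U" by (simp add: U_def)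
      then show ?thesis using comp_noedge[OF sg C w1C _ that] by (simp add: U_def)
    qed
    have agree: "E' a b = E a b" if "\<not>(a\<in>C \<and> b\<in>C)" for a b
      using that NC by (auto simp: E'_def local_comp_def)
    have Ex': "E' x d = E x d" "E' y d = E y d" for d
      using m1 sym by (auto simp: E'_def local_comp_def)
    have E'sym: "induced E' D p q \<Longrightarrow> induced E' D q p" for p q
      using S' by (auto simp: simple_graph_def induced_def)
    have Euw1: "E w1 u" using RC[OF Ruw1] sym by simp
    have Ew12: "E w1 w2" using RC[OF Rw12] by simp
    have step1: "induced E' D u w2"
      using m2 m2' Euw1 Ew12 uD by (simp add: induced_def E'_def local_comp_def D_def)
    have p2': "rtrancl_path (induced E' D) w2 rest v"
    proof (rule path_mono[OF p2])
      fix p q assume pq: "R p q" "p \<in> insert w2 (set rest)" "q \<in> set rest"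
      have "E' p q = E p q" using m3[OF pq(3)] by (auto simp: E'_def local_comp_def)
      then show "induced E' D p q" using pq RC[OF pq(1)] by (auto simp: induced_def D_def)
    qed
    have pD: "rtrancl_path (induced E' D) u (w2 # rest) v" using step1 p2' by (simp add: path_Cons)
    have conn: "\<forall>a\<in>D. \<forall>b\<in>D. (induced E' D)\<^sup>*\<^sup>* a b"
    proof (intro ballI)
      fix a b assume ab: "a \<in> D" "b \<in> D"
      have "(induced E' D)\<^sup>*\<^sup>* u a" "(induced E' D)\<^sup>*\<^sup>* u b"
        using path_reach[OF pD] ab by (auto simp: D_def)
      moreover have "(induced E' D)\<^sup>*\<^sup>* a u" using rtranclp_sym[OF \<open>(induced E' D)\<^sup>*\<^sup>* u a\<close>] E'sym by blast
      ultimately show "(induced E' D)\<^sup>*\<^sup>* a b" by (meson rtranclp_trans)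
    qed
    have rkD: "rk2 E' x y D"
    proof -
      have "rk2 E x y {u,v}" by (rule okrk[OF okuv])
      then have "rk2 E x y D" using uD vD unfolding rk2_def by blast
      then show ?thesis unfolding rk2_def Ex' .
    qed
    have DnC: "D \<noteq> C" using w1D w1C by blast
    have res: "Good ((V-C) \<union> D) (induced E' ((V-C) \<union> D)) x y \<and>
         card (components (((V-C) \<union> D) - {x,y}) (induced E' ((V-C) \<union> D))) = card (components (V-{x,y}) E) \<and>
         card ((V-C) \<union> D) < card V \<and> (V-C) \<union> D \<subseteq> V"
      by (rule shrink_general[OF G C S' agree DC _ DnC conn rkD]) (use uD in auto)
    have w1V: "w1 \<in> V" using w1C CU by (auto simp: U_def)
    have "is_vertex_minor V E W F" if "is_vertex_minor ((V-C) \<union> D) (induced E' ((V-C) \<union> D)) W F" for W F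
    proof -
      have "is_vertex_minor V E' W F" by (rule vm_del[OF _ that]) (use res in blast)
      then show ?thesis using vm_lc[OF w1V, of E W F] by (simp add: E'_def)
    qed
    then show ?thesis using res by blast
  qed
qed



lemma graph_iso_sym: "graph_iso A R B S \<Longrightarrow> graph_iso B S A R"
proof -
  assume "graph_iso A R B S"
  then obtain f where f: "bij_betw f A B" "\<forall>a\<in>A. \<forall>b\<in>A. R a b \<longleftrightarrow> S (f a) (f b)"
    by (auto simp: graph_iso_def)
  define h where "h = inv_into A f"
  have h: "bij_betw h B A" using bij_betw_inv_into[OF f(1)] by (simp add: h_def)
  have fh: "f (h b) = b" if "b \<in> B" for b using bij_betw_inv_into_right[OF f(1) that] by (simp add: h_def)
  have hA: "h b \<in> A" if "b \<in> B" for b using h that by (auto simp: bij_betw_def)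
  have "\<forall>a\<in>B. \<forall>b\<in>B. S a b \<longleftrightarrow> R (h a) (h b)"
    using f(2) hA fh by metis
  then show ?thesis using h by (auto simp: graph_iso_def)
qed

lemma rk2_card: assumes "finite C" "rk2 E x y C" shows "2 \<le> card C"
proof (rule ccontr)
  assume "\<not> 2 \<le> card C"
  then have "card C \<le> Suc 0" by simp
  then have all: "\<forall>a\<in>C. \<forall>b\<in>C. a = b" using card_le_Suc0_iff_eq[OF assms(1)] by blast
  obtain d1 d3 where "d1 \<in> C" "E x d1" "d3 \<in> C" "E x d3 \<noteq> E y d3" "\<exists>d2\<in>C. E y d2"
    using assms(2) unfolding rk2_def by blast
  then show False using all by metis
qed

lemma comp_edge2:
  assumes sg: "simple_graph V E" and C: "C \<in> components U E" and "C = {u,v}" "u \<noteq> v"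
  shows "E u v"
proof -
  have "(induced E C)\<^sup>*\<^sup>* u v" using comp_conn[OF sg C] assms(3) by simp
  then show ?thesis
  proof (cases rule: converse_rtranclpE)
    case base then show ?thesis using assms(4) by simp
  next
    case (step z)
    then have "z \<in> C" "E u z" by (auto simp: induced_def)
    moreover have "z \<noteq> u" using sg \<open>E u z\<close> by (auto simp: simple_graph_def)
    ultimately show ?thesis using assms(3) by auto
  qed
qed

lemma comps_eq: "induced E' U = induced E U \<Longrightarrow> components U E' = components U E"
  by (simp add: components_def)

lemma Claim_lc:
  assumes "Claim V (local_comp E u) x y" "u \<in> V"
    "components (V-{x,y}) (local_comp E u) = components (V-{x,y}) E"
  shows "Claim V E x y"
  using assms vm_lc[OF assms(2)] unfolding Claim_def by metis

lemma lc_step: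
  assumes G: "Good V E x y" and C: "C \<in> components (V-{x,y}) E" and Cuv: "C = {u,v}" "u \<noteq> v"
    and nD: "\<not>(E x u \<and> E y u)"
  shows "Good V (local_comp E u) x y \<and>
    components (V-{x,y}) (local_comp E u) = components (V-{x,y}) E \<and>
    local_comp E u x v = (E x v \<noteq> E x u) \<and> local_comp E u y v = (E y v \<noteq> E y u) \<and>
    local_comp E u x y = E x y \<and>
    (\<forall>d. d \<noteq> v \<longrightarrow> local_comp E u x d = E x d \<and> local_comp E u y d = E y d)"
proof -
  define U where "U = V - {x,y}"
  define E' where "E' = local_comp E u"
  have sg: "simple_graph V E" and xV: "x \<in> V" and yV: "y \<in> V" and xy: "x \<noteq> y"
    and rk: "\<forall>K\<in>components U E. rk2 E x y K"
    using G by (auto simp: Good_def U_def)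
  have C': "C \<in> components U E" using C by (simp add: U_def)
  have sym: "E a b \<Longrightarrow> E b a" for a b using sg by (simp add: simple_graph_def)
  have irr: "\<not> E a a" for a using sg unfolding simple_graph_def by blast
  have inV: "E a b \<Longrightarrow> a \<in> V \<and> b \<in> V" for a b using sg by (simp add: simple_graph_def)
  have CU: "C \<subseteq> U" using comp_sub[OF C'] .
  have uC: "u \<in> C" and vC: "v \<in> C" using Cuv by auto
  have Euv: "E u v" using comp_edge2[OF sg C' Cuv] .
  have NC: "z \<in> C \<or> z = x \<or> z = y" if "E u z" for z
  proof (cases "z = x \<or> z = y")
    case False
    then have "z \<in> U" using inV[OF that] by (simp add: U_def)
    then show ?thesis using comp_noedge[OF sg C' uC _ that] by simp
  qed simp
  have vx: "v \<noteq> x" "v \<noteq> y" using vC CU by (auto simp: U_def)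
  have ind: "induced E' U = induced E U"
  proof (rule ext, rule ext)
    fix a b
    show "induced E' U a b = induced E U a b"
    proof (cases "a \<in> U \<and> b \<in> U \<and> a \<noteq> b \<and> E u a \<and> E u b")
      case True
      then have "a \<in> C" "b \<in> C" "a \<noteq> u" "b \<noteq> u" using NC irr by (auto simp: U_def)
      then have False using True Cuv by auto
      then show ?thesis ..
    next
      case False
      then show ?thesis by (auto simp: induced_def E'_def local_comp_def)
    qed
  qed
  have comps: "components U E' = components U E" by (rule comps_eq[OF ind])
  have exy: "E' x y = E x y" using nD sym by (auto simp: E'_def local_comp_def)
  have other: "E' x d = E x d \<and> E' y d = E y d" if "d \<noteq> v" for d
  proof -
    have "\<not> (E u d \<and> d \<noteq> x \<and> d \<noteq> y)"
    proof
      assume h: "E u d \<and> d \<noteq> x \<and> d \<noteq> y"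
      then have "d \<in> C" using NC by blast
      then show False using that Cuv h irr by auto
    qed
    then show ?thesis using nD sym by (auto simp: E'_def local_comp_def)
  qed
  have nv: "E' x v = (E x v \<noteq> E x u)" "E' y v = (E y v \<noteq> E y u)"
    using vx Euv sym by (auto simp: E'_def local_comp_def)
  have simple': "simple_graph V E'" using simple_lc[OF sg] by (simp add: E'_def)
  have rk': "\<forall>K\<in>components U E'. rk2 E' x y K"
  proof
    fix K assume K: "K \<in> components U E'"
    then have K': "K \<in> components U E" using comps by simp
    show "rk2 E' x y K"
    proof (cases "K = C")
      case True
      have "rk2 E x y {u,v}" using rk C' Cuv by simp
      then have "rk2 E' x y {u,v}" using nv other[of u] Cuv(2) nD unfolding rk2_def by auto
      then show ?thesis using True Cuv by simp
    next
      case False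
      have "v \<notin> K" using comp_disj[OF sg K' C'] vC False by blast
      then have "\<forall>d\<in>K. E' x d = E x d \<and> E' y d = E y d" using other by metis
      then show ?thesis using rk K' unfolding rk2_def by auto
    qed
  qed
  show ?thesis
    using simple' xV yV xy rk' comps exy other nv
    unfolding Good_def U_def[symmetric] E'_def[symmetric] by simp
qed

definition AB :: "('a \<Rightarrow> 'a \<Rightarrow> bool) \<Rightarrow> 'a \<Rightarrow> 'a \<Rightarrow> 'a set \<Rightarrow> bool" where
  "AB E x y C \<longleftrightarrow> (\<exists>a b. C = {a,b} \<and> E x a \<and> \<not> E y a \<and> \<not> E x b \<and> E y b)"

definition AD :: "('a \<Rightarrow> 'a \<Rightarrow> bool) \<Rightarrow> 'a \<Rightarrow> 'a \<Rightarrow> 'a set \<Rightarrow> bool" where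
  "AD E x y C \<longleftrightarrow> (\<exists>a b. C = {a,b} \<and> E x a \<and> \<not> E y a \<and> E x b \<and> E y b)"

lemma AB_cong: "\<forall>d\<in>K. E' x d = E x d \<and> E' y d = E y d \<Longrightarrow> AB E' x y K = AB E x y K"
  unfolding AB_def by (metis insertCI)

lemma AD_cong: "\<forall>d\<in>K. E' x d = E x d \<and> E' y d = E y d \<Longrightarrow> AD E' x y K = AD E x y K"
  unfolding AD_def by (metis insertCI)



lemma final_iso:
  assumes G: "Good V E x y"
    and ABf: "\<forall>C\<in>components (V-{x,y}) E. C = {A C, B C} \<and> A C \<noteq> B C"
    and FA: "\<forall>C\<in>components (V-{x,y}) E. \<forall>C'\<in>components (V-{x,y}) E.
        (F (A C) (A C') \<longleftrightarrow> C \<noteq> C') \<and> (F (B C) (B C') \<longleftrightarrow> C \<noteq> C') \<and>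
        (F (A C) (B C') \<longleftrightarrow> C = C') \<and> (F (B C) (A C') \<longleftrightarrow> C = C')"
  shows "graph_iso (V-{x,y}) F (matched_cliques_V (card (components (V-{x,y}) E))) matched_cliques_E"
proof -
  define U where "U = V - {x,y}"
  define CC where "CC = components U E"
  define c where "c = card CC"
  have sg: "simple_graph V E" using G by (simp add: Good_def)
  have finCC: "finite CC" using sg comp_finite[of U E] by (simp add: CC_def U_def simple_graph_def)
  obtain g where g: "bij_betw g {0..<c} CC" using ex_bij_betw_nat_finite[OF finCC] c_def by blast
  have gi: "g i \<in> CC" if "i < c" for i using g that by (auto simp: bij_betw_def)
  have ginj: "g i = g j \<longleftrightarrow> i = j" if "i < c" "j < c" for i j
    using g that unfolding bij_betw_def inj_on_def by auto
  have ABC: "C = {A C, B C}" "A C \<noteq> B C" if "C \<in> CC" for C using ABf that by (auto simp: CC_def U_def)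
  define f where "f = (\<lambda>(i,p). if p then A (g i) else B (g i))"
  have fin: "f (i,p) \<in> g i" if "i < c" for i p using ABC[OF gi[OF that]] by (auto simp: f_def)
  have M: "matched_cliques_V c = {0..<c} \<times> (UNIV :: bool set)" by (simp add: matched_cliques_V_def)
  have inj: "inj_on f (matched_cliques_V c)"
  proof (rule inj_onI)
    fix a b assume a: "a \<in> matched_cliques_V c" and b: "b \<in> matched_cliques_V c" and ab: "f a = f b"
    obtain i p where ip: "a = (i,p)" "i < c" using a M by auto
    obtain j q where jq: "b = (j,q)" "j < c" using b M by auto
    have "f a \<in> g i" "f b \<in> g j" using fin ip jq by auto
    then have "g i = g j" using comp_disj[OF sg gi[OF ip(2), unfolded CC_def] gi[OF jq(2), unfolded CC_def]] ab by simp
    then have ij: "i = j" using ginj ip jq by simp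
    then have "p = q" using ab ip jq ABC(2)[OF gi[OF ip(2)]] by (auto simp: f_def split: if_splits)
    then show "a = b" using ij ip jq by simp
  qed
  have img: "f ` matched_cliques_V c = U"
  proof
    show "f ` matched_cliques_V c \<subseteq> U"
    proof
      fix z assume "z \<in> f ` matched_cliques_V c"
      then obtain i p where "i < c" "z = f (i,p)" using M by auto
      then show "z \<in> U" using fin gi comp_sub[of "g i" U E] by (auto simp: CC_def)
    qed
    show "U \<subseteq> f ` matched_cliques_V c"
    proof
      fix z assume "z \<in> U"
      then obtain K where K: "K \<in> CC" "z \<in> K" using comp_cover[of z U E] by (auto simp: CC_def)
      then obtain i where i: "i < c" "g i = K" using g by (auto simp: bij_betw_def)
      have "z = A K \<or> z = B K" using ABC(1)[OF K(1)] K(2) by auto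
      then show "z \<in> f ` matched_cliques_V c"
      proof
        assume "z = A K" then have "z = f (i,True)" using i by (simp add: f_def)
        then show ?thesis using i M by auto
      next
        assume "z = B K" then have "z = f (i,False)" using i by (simp add: f_def)
        then show ?thesis using i M by auto
      qed
    qed
  qed
  have bij: "bij_betw f (matched_cliques_V c) U" using inj img by (simp add: bij_betw_def)
  have edges: "\<forall>a\<in>matched_cliques_V c. \<forall>b\<in>matched_cliques_V c. matched_cliques_E a b \<longleftrightarrow> F (f a) (f b)"
  proof (intro ballI)
    fix a b assume a: "a \<in> matched_cliques_V c" and b: "b \<in> matched_cliques_V c"
    obtain i p where ip: "a = (i,p)" "i < c" using a M by auto
    obtain j q where jq: "b = (j,q)" "j < c" using b M by auto
    have FF: "(F (A (g i)) (A (g j)) \<longleftrightarrow> i \<noteq> j) \<and> (F (B (g i)) (B (g j)) \<longleftrightarrow> i \<noteq> j) \<and>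
        (F (A (g i)) (B (g j)) \<longleftrightarrow> i = j) \<and> (F (B (g i)) (A (g j)) \<longleftrightarrow> i = j)"
      using FA gi[OF ip(2)] gi[OF jq(2)] ginj[OF ip(2) jq(2)] by (simp add: CC_def U_def)
    show "matched_cliques_E a b \<longleftrightarrow> F (f a) (f b)"
      using FF ip(1) jq(1) by (cases p; cases q) (auto simp: matched_cliques_E_def f_def)
  qed
  have "graph_iso (matched_cliques_V c) matched_cliques_E U F"
    unfolding graph_iso_def using bij edges by blast
  then show ?thesis using graph_iso_sym by (metis U_def CC_def c_def)
qed



lemma comp_cross:
  assumes sg: "simple_graph V E" and C: "C \<in> components U E" and C': "C' \<in> components U E"
    and "C \<noteq> C'" "p \<in> C" "q \<in> C'"
  shows "\<not> E p q"
proof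
  assume "E p q"
  moreover have "q \<in> U" using comp_sub[OF C'] assms(6) by blast
  ultimately have "q \<in> C" using comp_noedge[OF sg C assms(5)] by blast
  then show False using comp_disj[OF sg C C'] assms by blast
qed

lemma final_common:
  assumes G: "Good V E x y" and T: "\<forall>C\<in>components (V-{x,y}) E. \<exists>a b. C = {a,b} \<and> E x a \<and> \<not> E y a \<and> E x b = bx \<and> E y b"
  obtains A B where "\<forall>C\<in>components (V-{x,y}) E. C = {A C, B C} \<and> A C \<noteq> B C \<and>
     E x (A C) \<and> \<not> E y (A C) \<and> E x (B C) = bx \<and> E y (B C) \<and> E (A C) (B C) \<and> A C \<in> V-{x,y} \<and> B C \<in> V-{x,y}"
proof -
  have sg: "simple_graph V E" using G by (simp add: Good_def)
  from bchoice[OF T] obtain A where "\<forall>C\<in>components (V-{x,y}) E. \<exists>b. C = {A C,b} \<and> E x (A C) \<and> \<not> E y (A C) \<and> E x b = bx \<and> E y b" by blast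
  from bchoice[OF this] obtain B where AB: "\<forall>C\<in>components (V-{x,y}) E. C = {A C,B C} \<and> E x (A C) \<and> \<not> E y (A C) \<and> E x (B C) = bx \<and> E y (B C)" by blast
  have "C = {A C, B C} \<and> A C \<noteq> B C \<and>
     E x (A C) \<and> \<not> E y (A C) \<and> E x (B C) = bx \<and> E y (B C) \<and> E (A C) (B C) \<and> A C \<in> V-{x,y} \<and> B C \<in> V-{x,y}"
    if C: "C \<in> components (V-{x,y}) E" for C
  proof -
    have h: "C = {A C,B C}" "E x (A C)" "\<not> E y (A C)" "E x (B C) = bx" "E y (B C)" using AB C by auto
    have ne: "A C \<noteq> B C" using h by auto
    have "E (A C) (B C)" using comp_edge2[OF sg C h(1) ne] .
    moreover have "A C \<in> V-{x,y}" "B C \<in> V-{x,y}" using comp_sub[OF C] h(1) by auto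
    ultimately show ?thesis using h ne by simp
  qed
  then have H: "\<forall>C\<in>components (V-{x,y}) E. C = {A C, B C} \<and> A C \<noteq> B C \<and>
     E x (A C) \<and> \<not> E y (A C) \<and> E x (B C) = bx \<and> E y (B C) \<and> E (A C) (B C) \<and> A C \<in> V-{x,y} \<and> B C \<in> V-{x,y}"
    by blast
  show ?thesis by (rule that[OF H])
qed

lemma final_AB:
  assumes G: "Good V E x y" and nxy: "\<not> E x y" and AB: "\<forall>C\<in>components (V-{x,y}) E. AB E x y C"
  shows "Claim V E x y"
proof -
  define U where "U = V - {x,y}"
  have sg: "simple_graph V E" and xV: "x \<in> V" and yV: "y \<in> V" using G by (auto simp: Good_def)
  have irr: "\<not> E a a" for a using sg unfolding simple_graph_def by blast
  have T: "\<forall>C\<in>components (V-{x,y}) E. \<exists>a b. C = {a,b} \<and> E x a \<and> \<not> E y a \<and> E x b = False \<and> E y b"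
    using AB unfolding AB_def by simp
  obtain A B where AB: "\<forall>C\<in>components U E. C = {A C, B C} \<and> A C \<noteq> B C \<and>
     E x (A C) \<and> \<not> E y (A C) \<and> E x (B C) = False \<and> E y (B C) \<and> E (A C) (B C) \<and> A C \<in> U \<and> B C \<in> U"
    using final_common[OF G T] unfolding U_def by blast
  define F where "F = induced (lc_seq E [x,y]) U"
  have L: "lc_seq E [x,y] = local_comp (local_comp E x) y" by (simp add: lc_seq_def)
  have Fpq: "F p q = (if p\<noteq>q \<and> E y p \<and> E y q then \<not>(if p\<noteq>q \<and> E x p \<and> E x q then \<not>E p q else E p q)
     else (if p\<noteq>q \<and> E x p \<and> E x q then \<not>E p q else E p q))" if "p \<in> U" "q \<in> U" for p q
    using that nxy by (simp add: F_def L induced_def local_comp_def U_def)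
  have vm: "is_vertex_minor V E U F" unfolding is_vertex_minor_def F_def U_def using xV yV
    by (intro exI[of _ "[x,y]"]) auto
  have FA: "\<forall>C\<in>components U E. \<forall>C'\<in>components U E.
        (F (A C) (A C') \<longleftrightarrow> C \<noteq> C') \<and> (F (B C) (B C') \<longleftrightarrow> C \<noteq> C') \<and>
        (F (A C) (B C') \<longleftrightarrow> C = C') \<and> (F (B C) (A C') \<longleftrightarrow> C = C')"
  proof (intro ballI)
    fix C C' assume C: "C \<in> components U E" and C': "C' \<in> components U E"
    have a: "C = {A C, B C}" "A C \<noteq> B C" "E x (A C)" "\<not> E y (A C)" "\<not> E x (B C)" "E y (B C)" "E (A C) (B C)" "A C \<in> U" "B C \<in> U"
      using AB C by auto
    have b: "C' = {A C', B C'}" "A C' \<noteq> B C'" "E x (A C')" "\<not> E y (A C')" "\<not> E x (B C')" "E y (B C')" "E (A C') (B C')" "A C' \<in> U" "B C' \<in> U"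
      using AB C' by auto
    show "(F (A C) (A C') \<longleftrightarrow> C \<noteq> C') \<and> (F (B C) (B C') \<longleftrightarrow> C \<noteq> C') \<and>
        (F (A C) (B C') \<longleftrightarrow> C = C') \<and> (F (B C) (A C') \<longleftrightarrow> C = C')"
    proof (cases "C = C'")
      case True
      then show ?thesis using a b Fpq irr sg by (auto simp: simple_graph_def)
    next
      case False
      have cr: "\<not> E p q" if "p \<in> C" "q \<in> C'" for p q using comp_cross[OF sg C C' False that] .
      have cr': "\<not> E p q" if "p \<in> C'" "q \<in> C" for p q using comp_cross[OF sg C' C _ that] False by metis
      have ne: "A C \<noteq> A C'" "B C \<noteq> B C'" "A C \<noteq> B C'" "B C \<noteq> A C'"
        using comp_disj[OF sg C C'] False a(1) b(1) by blast+
      show ?thesis using False Fpq a b ne cr[of "A C" "A C'"] cr[of "B C" "B C'"] cr[of "A C" "B C'"] cr[of "B C" "A C'"]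
        by auto
    qed
  qed
  have "graph_iso U F (matched_cliques_V (card (components U E))) matched_cliques_E"
    using final_iso[OF G, of A B F] AB FA unfolding U_def by auto
  then show ?thesis using vm unfolding Claim_def U_def by blast
qed

lemma final_AD:
  assumes G: "Good V E x y" and exy: "E x y" and AD: "\<forall>C\<in>components (V-{x,y}) E. AD E x y C"
  shows "Claim V E x y"
proof -
  define U where "U = V - {x,y}"
  have sg: "simple_graph V E" and xV: "x \<in> V" and yV: "y \<in> V" and xy: "x \<noteq> y" using G by (auto simp: Good_def)
  have irr: "\<not> E a a" for a using sg unfolding simple_graph_def by blast
  have eyx: "E y x" using exy sg by (simp add: simple_graph_def)
  have T: "\<forall>C\<in>components (V-{x,y}) E. \<exists>a b. C = {a,b} \<and> E x a \<and> \<not> E y a \<and> E x b = True \<and> E y b"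
    using AD unfolding AD_def by simp
  obtain A B where AB: "\<forall>C\<in>components U E. C = {A C, B C} \<and> A C \<noteq> B C \<and>
     E x (A C) \<and> \<not> E y (A C) \<and> E x (B C) = True \<and> E y (B C) \<and> E (A C) (B C) \<and> A C \<in> U \<and> B C \<in> U"
    using final_common[OF G T] unfolding U_def by blast
  define F where "F = induced (lc_seq E [y,x]) U"
  have L: "lc_seq E [y,x] = local_comp (local_comp E y) x" by (simp add: lc_seq_def)
  define E1 where "E1 = local_comp E y"
  have E1x: "E1 x p = (if E y p then \<not> E x p else E x p)" if "p \<in> U" for p
    using that eyx by (auto simp: E1_def local_comp_def U_def)
  have E1pq: "E1 p q = (if p\<noteq>q \<and> E y p \<and> E y q then \<not>E p q else E p q)" for p q
    by (simp add: E1_def local_comp_def)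
  have Fpq: "F p q = (if p\<noteq>q \<and> E1 x p \<and> E1 x q then \<not>E1 p q else E1 p q)" if "p \<in> U" "q \<in> U" for p q
  proof -
    have L': "lc_seq E [y,x] = local_comp E1 x" by (simp add: lc_seq_def E1_def)
    show ?thesis using that by (simp add: F_def L' induced_def local_comp_def)
  qed
  have vm: "is_vertex_minor V E U F" unfolding is_vertex_minor_def F_def U_def using xV yV
    by (intro exI[of _ "[y,x]"]) auto
  have FA: "\<forall>C\<in>components U E. \<forall>C'\<in>components U E.
        (F (A C) (A C') \<longleftrightarrow> C \<noteq> C') \<and> (F (B C) (B C') \<longleftrightarrow> C \<noteq> C') \<and>
        (F (A C) (B C') \<longleftrightarrow> C = C') \<and> (F (B C) (A C') \<longleftrightarrow> C = C')"
  proof (intro ballI)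
    fix C C' assume C: "C \<in> components U E" and C': "C' \<in> components U E"
    have a: "C = {A C, B C}" "A C \<noteq> B C" "E x (A C)" "\<not> E y (A C)" "E x (B C)" "E y (B C)" "E (A C) (B C)" "A C \<in> U" "B C \<in> U"
      using AB C by auto
    have b: "C' = {A C', B C'}" "A C' \<noteq> B C'" "E x (A C')" "\<not> E y (A C')" "E x (B C')" "E y (B C')" "E (A C') (B C')" "A C' \<in> U" "B C' \<in> U"
      using AB C' by auto
    have x1: "E1 x (A C)" "\<not> E1 x (B C)" "E1 x (A C')" "\<not> E1 x (B C')"
      using E1x a b by auto
    show "(F (A C) (A C') \<longleftrightarrow> C \<noteq> C') \<and> (F (B C) (B C') \<longleftrightarrow> C \<noteq> C') \<and>
        (F (A C) (B C') \<longleftrightarrow> C = C') \<and> (F (B C) (A C') \<longleftrightarrow> C = C')"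
    proof (cases "C = C'")
      case True
      have sa: "E (B C) (A C)" using a(7) sg by (simp add: simple_graph_def)
      have F1: "\<not> F (A C) (A C)" "\<not> F (B C) (B C)"
        using Fpq[of "A C" "A C"] Fpq[of "B C" "B C"] a E1pq[of "A C" "A C"] E1pq[of "B C" "B C"] irr by auto
      have F2: "F (A C) (B C)" "F (B C) (A C)"
        using Fpq[of "A C" "B C"] Fpq[of "B C" "A C"] a x1 E1pq[of "A C" "B C"] E1pq[of "B C" "A C"] sa by auto
      show ?thesis using True F1 F2 by simp
    next
      case False
      have aC: "A C \<in> C" "B C \<in> C" "A C' \<in> C'" "B C' \<in> C'" using a(1) b(1) by auto
      have cr: "\<not> E p q" if "p \<in> C" "q \<in> C'" for p q using comp_cross[OF sg C C' False that] .
      have ne: "A C \<noteq> A C'" "B C \<noteq> B C'" "A C \<noteq> B C'" "B C \<noteq> A C'"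
        using comp_disj[OF sg C C'] False a(1) b(1) by blast+
      have G1: "F (A C) (A C')"
        using Fpq[of "A C" "A C'"] E1pq[of "A C" "A C'"] a b x1 ne cr[OF aC(1,3)] by auto
      have G2: "F (B C) (B C')"
        using Fpq[of "B C" "B C'"] E1pq[of "B C" "B C'"] a b x1 ne cr[OF aC(2,4)] by auto
      have G3: "\<not> F (A C) (B C')"
        using Fpq[of "A C" "B C'"] E1pq[of "A C" "B C'"] a b x1 ne cr[OF aC(1,4)] by auto
      have G4: "\<not> F (B C) (A C')"
        using Fpq[of "B C" "A C'"] E1pq[of "B C" "A C'"] a b x1 ne cr[OF aC(2,3)] by auto
      show ?thesis using False G1 G2 G3 G4
        by auto
    qed
  qed
  have "graph_iso U F (matched_cliques_V (card (components U E))) matched_cliques_E"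
    using final_iso[OF G, of A B F] AB FA unfolding U_def by auto
  then show ?thesis using vm unfolding Claim_def U_def by blast
qed



lemma phaseAD:
  "Good V E x y \<Longrightarrow> E x y \<Longrightarrow> \<forall>C\<in>components (V-{x,y}) E. AB E x y C \<or> AD E x y C \<Longrightarrow>
   card {C\<in>components (V-{x,y}) E. \<not> AD E x y C} = n \<Longrightarrow> Claim V E x y"
proof (induction n arbitrary: E rule: less_induct)
  case (less n E)
  define CC where "CC = components (V-{x,y}) E"
  have sg: "simple_graph V E" using less.prems(1) by (simp add: Good_def)
  show ?case
  proof (cases "\<exists>C\<in>CC. \<not> AD E x y C")
    case False
    show ?thesis by (rule final_AD[OF less.prems(1,2)]) (use False in \<open>simp add: CC_def\<close>)
  next
    case True
    then obtain C where C: "C \<in> CC" "\<not> AD E x y C" by blast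
    then have "AB E x y C" using less.prems(3) unfolding CC_def by blast
    then obtain a b where ab: "C = {a,b}" "E x a" "\<not> E y a" "\<not> E x b" "E y b" by (auto simp: AB_def)
    have ne: "a \<noteq> b" using ab by auto
    have nD: "\<not>(E x a \<and> E y a)" using ab by simp
    define E' where "E' = local_comp E a"
    have st: "Good V E' x y" "components (V-{x,y}) E' = CC"
      "E' x b = (E x b \<noteq> E x a)" "E' y b = (E y b \<noteq> E y a)" "E' x y = E x y"
      "\<forall>d. d \<noteq> b \<longrightarrow> E' x d = E x d \<and> E' y d = E y d"
      using lc_step[OF less.prems(1) C(1)[unfolded CC_def] ab(1) ne nD] unfolding E'_def CC_def by auto
    have ADC: "AD E' x y C"
      unfolding AD_def ab(1)
      by (rule exI[of _ a], rule exI[of _ b]) (use st(3,4) st(6)[rule_format, OF ne] ab in simp)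
    have same: "\<forall>d\<in>K. E' x d = E x d \<and> E' y d = E y d" if "K \<in> CC" "K \<noteq> C" for K
    proof -
      have "b \<notin> K" using comp_disj[OF sg that(1)[unfolded CC_def] C(1)[unfolded CC_def]] that(2) ab(1) by blast
      then show ?thesis using st(6) by metis
    qed
    have setq: "{K\<in>components (V-{x,y}) E'. \<not> AD E' x y K} = {K\<in>CC. \<not> AD E x y K} - {C}"
    proof (rule set_eqI)
      fix K
      show "K \<in> {K\<in>components (V-{x,y}) E'. \<not> AD E' x y K} \<longleftrightarrow> K \<in> {K\<in>CC. \<not> AD E x y K} - {C}"
      proof (cases "K \<in> CC \<and> K \<noteq> C")
        case True
        then show ?thesis using AD_cong[OF same[of K]] st(2) by simp
      next
        case False
        then show ?thesis using ADC st(2) by auto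
      qed
    qed
    have finCC: "finite CC" using sg comp_finite[of "V-{x,y}" E] by (simp add: CC_def simple_graph_def)
    have lt: "card {K\<in>components (V-{x,y}) E'. \<not> AD E' x y K} < n"
      unfolding setq less.prems(4)[symmetric, folded CC_def]
      by (rule card_Diff1_less) (use finCC C in auto)
    have inv: "\<forall>K\<in>components (V-{x,y}) E'. AB E' x y K \<or> AD E' x y K"
    proof
      fix K assume K: "K \<in> components (V-{x,y}) E'"
      show "AB E' x y K \<or> AD E' x y K"
      proof (cases "K = C")
        case True then show ?thesis using ADC by simp
      next
        case False
        then show ?thesis using K st(2) less.prems(3) AB_cong[OF same[of K]] AD_cong[OF same[of K]]
          unfolding CC_def by simp
      qed
    qed
    have "Claim V E' x y"
      using less.IH[OF lt st(1) _ inv refl] st(5) less.prems(2) by simp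
    moreover have "a \<in> V" using comp_sub[OF C(1)[unfolded CC_def]] ab(1) by auto
    ultimately show ?thesis using Claim_lc[of V E a x y] st(2) unfolding E'_def CC_def by simp
  qed
qed

lemma phaseAB:
  "Good V E x y \<Longrightarrow> \<forall>C\<in>components (V-{x,y}) E. card C = 2 \<Longrightarrow>
   card {C\<in>components (V-{x,y}) E. \<not> AB E x y C} = n \<Longrightarrow> Claim V E x y"
proof (induction n arbitrary: E rule: less_induct)
  case (less n E)
  define CC where "CC = components (V-{x,y}) E"
  have sg: "simple_graph V E" using less.prems(1) by (simp add: Good_def)
  show ?case
  proof (cases "\<exists>C\<in>CC. \<not> AB E x y C")
    case False
    then have allAB: "\<forall>C\<in>CC. AB E x y C" by blast
    show ?thesis
    proof (cases "E x y")
      case True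
      show ?thesis by (rule phaseAD[OF less.prems(1) True _ refl]) (use allAB in \<open>simp add: CC_def\<close>)
    next
      case False
      show ?thesis by (rule final_AB[OF less.prems(1) False]) (use allAB in \<open>simp add: CC_def\<close>)
    qed
  next
    case True
    then obtain C where C: "C \<in> CC" "\<not> AB E x y C" by blast
    have "card C = 2" using less.prems(2) C by (simp add: CC_def)
    then obtain p q where pq: "C = {p,q}" "p \<noteq> q" by (auto simp: card_2_iff)
    have rk: "rk2 E x y {p,q}" using less.prems(1) C pq by (simp add: Good_def CC_def)
    have nab1: "\<not>(E x p \<and> \<not> E y p \<and> \<not> E x q \<and> E y q)"
    proof
      assume h: "E x p \<and> \<not> E y p \<and> \<not> E x q \<and> E y q"
      have "AB E x y C" unfolding AB_def pq(1)
        by (rule exI[of _ p], rule exI[of _ q]) (use h in simp)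
      then show False using C(2) by simp
    qed
    have nab2: "\<not>(E x q \<and> \<not> E y q \<and> \<not> E x p \<and> E y p)"
    proof
      assume h: "E x q \<and> \<not> E y q \<and> \<not> E x p \<and> E y p"
      have "AB E x y C" unfolding AB_def pq(1)
        by (rule exI[of _ q], rule exI[of _ p]) (use h in \<open>simp add: insert_commute\<close>)
      then show False using C(2) by simp
    qed
    note nab = nab1 nab2
    obtain u v where uv: "C = {u,v}" "u \<noteq> v" "\<not>(E x u \<and> E y u)" "E x v" "E y v" "E x u \<noteq> E y u"
    proof (cases "E x p \<and> E y p")
      case True
      then have "\<not>(E x q \<and> E y q)" "E x q \<noteq> E y q" using rk unfolding rk2_def by auto
      then show ?thesis using that[of q p] True pq by (auto simp: insert_commute)
    next
      case False
      then have "E x q \<and> E y q" "E x p \<noteq> E y p" using rk nab unfolding rk2_def by auto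
      then show ?thesis using that[of p q] False pq by auto
    qed
    define E' where "E' = local_comp E u"
    have st: "Good V E' x y" "components (V-{x,y}) E' = CC"
      "E' x v = (E x v \<noteq> E x u)" "E' y v = (E y v \<noteq> E y u)"
      "\<forall>d. d \<noteq> v \<longrightarrow> E' x d = E x d \<and> E' y d = E y d"
      using lc_step[OF less.prems(1) C(1)[unfolded CC_def] uv(1,2,3)] unfolding E'_def CC_def by auto
    have ABC: "AB E' x y C"
    proof (cases "E x u")
      case True
      show ?thesis unfolding AB_def uv(1)
        by (rule exI[of _ u], rule exI[of _ v]) (use True st(3,4) st(5)[rule_format, of u] uv in simp)
    next
      case False
      then have "E y u" using uv by simp
      show ?thesis unfolding AB_def uv(1)
        by (rule exI[of _ v], rule exI[of _ u]) (use False \<open>E y u\<close> st(3,4) st(5)[rule_format, of u] uv in \<open>simp add: insert_commute\<close>)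
    qed
    have same: "\<forall>d\<in>K. E' x d = E x d \<and> E' y d = E y d" if "K \<in> CC" "K \<noteq> C" for K
    proof -
      have "v \<notin> K" using comp_disj[OF sg that(1)[unfolded CC_def] C(1)[unfolded CC_def]] that(2) uv(1) by blast
      then show ?thesis using st(5) by metis
    qed
    have setq: "{K\<in>components (V-{x,y}) E'. \<not> AB E' x y K} = {K\<in>CC. \<not> AB E x y K} - {C}"
    proof (rule set_eqI)
      fix K
      show "K \<in> {K\<in>components (V-{x,y}) E'. \<not> AB E' x y K} \<longleftrightarrow> K \<in> {K\<in>CC. \<not> AB E x y K} - {C}"
      proof (cases "K \<in> CC \<and> K \<noteq> C")
        case True
        then show ?thesis using AB_cong[OF same[of K]] st(2) by simp
      next
        case False
        then show ?thesis using ABC st(2) by auto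
      qed
    qed
    have finCC: "finite CC" using sg comp_finite[of "V-{x,y}" E] by (simp add: CC_def simple_graph_def)
    have lt: "card {K\<in>components (V-{x,y}) E'. \<not> AB E' x y K} < n"
      unfolding setq less.prems(3)[symmetric, folded CC_def]
      by (rule card_Diff1_less) (use finCC C in auto)
    have "Claim V E' x y"
      using less.IH[OF lt st(1) _ refl] st(2) less.prems(2) by (simp add: CC_def)
    moreover have "u \<in> V" using comp_sub[OF C(1)[unfolded CC_def]] uv(1) by auto
    ultimately show ?thesis using Claim_lc[of V E u x y] st(2) unfolding E'_def CC_def by simp
  qed
qed

lemma main: "Good V E x y \<Longrightarrow> Claim V E x y"
proof (induction "card V" arbitrary: V E rule: less_induct)
  case less
  define CC where "CC = components (V-{x,y}) E"
  have sg: "simple_graph V E" using less.prems by (simp add: Good_def)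
  show ?case
  proof (cases "\<exists>C\<in>CC. 3 \<le> card C")
    case True
    then obtain C where C: "C \<in> CC" "3 \<le> card C" by blast
    obtain V' E' where V': "V' \<subseteq> V" "card V' < card V" "Good V' E' x y"
      "card (components (V'-{x,y}) E') = card CC"
      "\<forall>W F. is_vertex_minor V' E' W F \<longrightarrow> is_vertex_minor V E W F"
      using shrink[OF less.prems C(1)[unfolded CC_def] C(2)] unfolding CC_def by blast
    have "Claim V' E' x y" using less.hyps[OF V'(2,3)] .
    then show ?thesis using V'(4,5) unfolding Claim_def CC_def by metis
  next
    case False
    have c2: "\<forall>C\<in>CC. card C = 2"
    proof
      fix C assume C: "C \<in> CC"
      have "finite C" using comp_sub[OF C[unfolded CC_def]] sg
        by (metis Diff_subset finite_subset simple_graph_def)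
      moreover have "rk2 E x y C" using less.prems C by (simp add: Good_def CC_def)
      ultimately have "2 \<le> card C" by (rule rk2_card)
      then show "card C = 2" using False C by auto
    qed
    show ?thesis by (rule phaseAB[OF less.prems _ refl]) (use c2 in \<open>simp add: CC_def\<close>)
  qed
qed

theorem lemma7p7:
  fixes V :: "'a set" and E :: "'a \<Rightarrow> 'a \<Rightarrow> bool" and x y :: 'a
  assumes "simple_graph V E"
    and "x \<in> V" and "y \<in> V" and "x \<noteq> y"
    and "\<forall>C \<in> components (V - {x, y}) E. gf2_rank E {x, y} C = 2"
  shows "\<exists>W F. is_vertex_minor V E W F \<and>
           graph_iso W F (matched_cliques_V (card (components (V - {x, y}) E))) matched_cliques_E"
proof -
  have "Good V E x y" using assms gf2_rank_2[OF assms(4)] by (simp add: Good_def)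
  then have "Claim V E x y" by (rule main)
  then show ?thesis unfolding Claim_def .
qed

end
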